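(* Let $n,d\ge 1$, let $X\in\mathbb{R}^{d\times n}$ have columns $x_1,\dots,x_n\in\mathbb{R}^d$, let $y=(y_1,\dots,y_n)^T\in\{-1,+1\}^n$, and set $Z=X\,\mathrm{diag}(y)\in\mathbb{R}^{d\times n}$. Let $q>0$, $C>0$, and let $e\in\mathbb{R}^n$ be a vector with all entries positive and $\|e\|_\infty=1$. Define $\theta_q:\mathbb{R}\to\mathbb{R}\cup\{+\infty\}$ by $\theta_q(t)=t^{-q}$ if $t>0$ and $\theta_q(t)=+\infty$ if $t\le 0$. Consider the primal problem $$\min\Big\{\Phi(r,\xi):=\sum_{i=1}^n\theta_q(r_i)+C\langle e,\xi\rangle \;\Big|\; Z^Tw+\beta y+\xi-r=0,\ \|w\|\le 1,\ \xi\ge 0,\ r,\xi\in\mathbb{R}^n,\ w\in\mathbb{R}^d,\ \beta\in\mathbb{R}\Big\}.$$ Let $\kappa=\frac{q+1}{q}\,q^{\frac{1}{q+1}}$. Then the Lagrangian dual of this problem (formed with a multiplier $\alpha\in\mathbb{R}^n$ for the equality constraint, $\eta\in\mathbb{R}^n_{+}$ for $\xi\ge0$, and $\lambda\ge 0$ for the constraint $\tfrac12(\|w\|^2-1)\le 0$) is $$-\min_{\alpha\in\mathbb{R}^n}\Big\{\Psi(\alpha):=\|Z\alpha\|-\kappa\sum_{i=1}^n\alpha_i^{\frac{q}{q+1}}\;\Big|\;0\le\alpha\le Ce,\ \langle y,\alpha\rangle=0\Big\}.$$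
   Context: $\|\cdot\|$ denotes the Euclidean norm and $\langle\cdot,\cdot\rangle$ the standard inner product; vector inequalities are componentwise. *)

theory Defs
  imports "HOL-Analysis.Analysis" "HOL-Library.Extended_Real"
begin

definition theta :: "real \<Rightarrow> real \<Rightarrow> ereal" where
  "theta q t = (if t > 0 then ereal (t powr (-q)) else \<infinity>)"

definition diagm :: "real^'n \<Rightarrow> real^'n^'n" where
  "diagm y = (\<chi> i j. if i = j then y $ i else 0)"

definition Zmat :: "real^'n^'d \<Rightarrow> real^'n \<Rightarrow> real^'n^'d" where
  "Zmat X y = X ** diagm y"

definition kappa :: "real \<Rightarrow> real" where
  "kappa q = (q + 1) / q * q powr (1 / (q + 1))"

definition Phi :: "real \<Rightarrow> real \<Rightarrow> real^'n \<Rightarrow> real^'n \<Rightarrow> real^'n \<Rightarrow> ereal" where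
  "Phi q C e r \<xi> = (\<Sum>i\<in>UNIV. theta q (r $ i)) + ereal (C * (e \<bullet> \<xi>))"

definition lagrangian ::
  "real \<Rightarrow> real \<Rightarrow> real^'n \<Rightarrow> real^'n^'d \<Rightarrow> real^'n \<Rightarrow>
   real^'n \<Rightarrow> real^'n \<Rightarrow> real^'d \<Rightarrow> real \<Rightarrow>
   real^'n \<Rightarrow> real^'n \<Rightarrow> real \<Rightarrow> ereal" where
  "lagrangian q C e X y r \<xi> w \<beta> \<alpha> \<eta> lam =
     Phi q C e r \<xi>
     + ereal (- (\<alpha> \<bullet> (transpose (Zmat X y) *v w + \<beta> *\<^sub>R y + \<xi> - r))
              - \<eta> \<bullet> \<xi> + lam * ((norm w ^ 2 - 1) / 2))"

definition dual_fun ::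
  "real \<Rightarrow> real \<Rightarrow> real^'n \<Rightarrow> real^'n^'d \<Rightarrow> real^'n \<Rightarrow>
   real^'n \<Rightarrow> real^'n \<Rightarrow> real \<Rightarrow> ereal" where
  "dual_fun q C e X y \<alpha> \<eta> lam =
     (INF p \<in> (UNIV :: ((real^'n) \<times> (real^'n) \<times> (real^'d) \<times> real) set).
        lagrangian q C e X y (fst p) (fst (snd p)) (fst (snd (snd p))) (snd (snd (snd p))) \<alpha> \<eta> lam)"

definition Psi :: "real \<Rightarrow> real^'n^'d \<Rightarrow> real^'n \<Rightarrow> real^'n \<Rightarrow> real" where
  "Psi q X y \<alpha> = norm (Zmat X y *v \<alpha>) - kappa q * (\<Sum>i\<in>UNIV. (\<alpha> $ i) powr (q / (q + 1)))"

definition dual_feasible :: "real \<Rightarrow> real^'n \<Rightarrow> real^'n \<Rightarrow> real^'n \<Rightarrow> bool" where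
  "dual_feasible C e y \<alpha> \<longleftrightarrow> (\<forall>i. 0 \<le> \<alpha> $ i \<and> \<alpha> $ i \<le> C * e $ i) \<and> y \<bullet> \<alpha> = 0"

end

theory Submission
  imports Defs
begin

lemma kappa_eq:
  assumes q: "q > 0" and a: "a \<ge> 0"
  shows "kappa q * a powr (q/(q+1)) = (q+1) * (a/q) powr (q/(q+1))"
proof -
  have "q powr (1/(q+1)) / q = q powr (1/(q+1) - 1)" using q by (simp add: powr_diff)
  also have "1/(q+1) - 1 = - (q/(q+1))" using q by (simp add: field_simps)
  finally have k: "kappa q = (q+1) / q powr (q/(q+1))"
    unfolding kappa_def using q by (simp add: powr_minus divide_inverse mult.commute)
  have "(a/q) powr (q/(q+1)) = a powr (q/(q+1)) / q powr (q/(q+1))"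
    using q a by (simp add: powr_divide)
  then show ?thesis using k by simp
qed

lemma key_ineq:
  assumes q: "q > 0" and a: "a \<ge> 0" and t: "t > 0"
  shows "kappa q * a powr (q/(q+1)) \<le> t powr (-q) + a*t"
proof (cases "a = 0")
  case True then show ?thesis using q by simp
next
  case False
  then have a: "a > 0" using a by simp
  let ?A = "t powr (-q)" and ?B = "a*t/q"
  have Y: "?A powr (1/(q+1)) * ?B powr (q/(q+1)) \<le> (1/(q+1))*?A + (q/(q+1))*?B"
    by (rule Youngs_inequality_0) (use q a t in \<open>auto simp: field_simps\<close>)
  have "?A powr (1/(q+1)) = t powr (-(q/(q+1)))" using t by (simp add: powr_powr)
  moreover have "?B powr (q/(q+1)) = (a/q) powr (q/(q+1)) * t powr (q/(q+1))"
    using a q t by (simp add: powr_mult[symmetric])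
  ultimately have "?A powr (1/(q+1)) * ?B powr (q/(q+1)) = (a/q) powr (q/(q+1))"
    using t by (simp add: powr_minus field_simps)
  with Y have "(a/q) powr (q/(q+1)) \<le> (1/(q+1))*?A + (q/(q+1))*?B" by simp
  then have "(q+1)*(a/q) powr (q/(q+1)) \<le> (q+1)*((1/(q+1))*?A + (q/(q+1))*?B)"
    using q by (intro mult_left_mono) auto
  also have "\<dots> = (q+1)*((1/(q+1))*?A) + (q+1)*((q/(q+1))*?B)" by (rule distrib_left)
  also have "(q+1)*((1/(q+1))*?A) = ?A" using q by simp
  also have "(q+1)*((q/(q+1))*?B) = a*t" using q by (simp add: divide_simps)
  finally have "(q+1)*(a/q) powr (q/(q+1)) \<le> ?A + a*t" .
  then show ?thesis using kappa_eq[OF q] a by simp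
qed

lemma attain:
  assumes q: "q > 0" and a: "a > 0"
  shows "((q/a) powr (1/(q+1))) powr (-q) + a * (q/a) powr (1/(q+1)) = kappa q * a powr (q/(q+1))"
proof -
  have 1: "((q/a) powr (1/(q+1))) powr (-q) = (a/q) powr (q/(q+1))"
    using q a by (simp add: powr_powr powr_divide powr_minus field_simps)
  define u where "u = a/q"
  have u: "u > 0" using q a by (simp add: u_def)
  have qa: "q/a = inverse u" by (simp add: u_def)
  have "a * (q/a) powr (1/(q+1)) = q * (u * u powr (-(1/(q+1))))"
  proof -
    have "(q/a) powr (1/(q+1)) = u powr (-(1/(q+1)))"
      using q a by (simp add: u_def powr_divide powr_minus_divide)
    moreover have "a = q * u" using q by (simp add: u_def)
    ultimately show ?thesis by simp
  qed
  also have "u * u powr (-(1/(q+1))) = u powr (q/(q+1))"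
  proof -
    have "u * u powr (-(1/(q+1))) = u powr (1 + (-(1/(q+1))))" using u by (simp add: powr_add del: diff_minus_eq_add add_uminus_conv_diff)
    also have "1 + (-(1/(q+1))) = q/(q+1)" using q by (simp add: field_simps)
    finally show ?thesis .
  qed
  finally have 2: "a * (q/a) powr (1/(q+1)) = q * (a/q) powr (q/(q+1))" by (simp add: u_def)
  show ?thesis using 1 2 kappa_eq[OF q, of a] a by (simp add: algebra_simps)
qed
lemma near:
  assumes q: "q > 0" and a: "a \<ge> 0" and d: "d > 0"
  shows "\<exists>t>0. t powr (-q) + a*t \<le> kappa q * a powr (q/(q+1)) + d"
proof (cases "a = 0")
  case True
  let ?t = "d powr (-1/q)"
  have "?t powr (-q) = d" using d q by (simp add: powr_powr)
  then show ?thesis using True d by (intro exI[of _ ?t]) auto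
next
  case False
  then show ?thesis using attain[OF q, of a] a d q
    by (intro exI[of _ "(q/a) powr (1/(q+1))"]) auto
qed

lemma inner_transpose:
  fixes Z :: "real^'n^'d"
  shows "\<alpha> \<bullet> (transpose Z *v w) = (Z *v \<alpha>) \<bullet> w"
  using adjoint_works[of "\<lambda>x. Z *v x" \<alpha> w] unfolding adjoint_matrix
  by (simp del: transpose_matrix_vector)


definition LF :: "real \<Rightarrow> real \<Rightarrow> real^'n \<Rightarrow> real^'n^'d \<Rightarrow> real^'n \<Rightarrow>
   real^'n \<Rightarrow> real^'n \<Rightarrow> real^'d \<Rightarrow> real \<Rightarrow> real^'n \<Rightarrow> real^'n \<Rightarrow> real \<Rightarrow> real" where
  "LF q C e X y r \<xi> w \<beta> \<alpha> \<eta> lam =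
     (\<Sum>i\<in>UNIV. r$i powr (-q) + \<alpha>$i * r$i) + (\<Sum>i\<in>UNIV. (C * e$i - \<alpha>$i - \<eta>$i) * \<xi>$i)
     - \<beta> * (y \<bullet> \<alpha>) - (Zmat X y *v \<alpha>) \<bullet> w + lam * ((norm w ^ 2 - 1) / 2)"

lemma lag_pos:
  assumes "\<forall>i. r$i > 0"
  shows "lagrangian q C e X y r \<xi> w \<beta> \<alpha> \<eta> lam = ereal (LF q C e X y r \<xi> w \<beta> \<alpha> \<eta> lam)"
proof -
  have th: "(\<Sum>i\<in>UNIV. theta q (r$i)) = ereal (\<Sum>i\<in>UNIV. r$i powr (-q))"
    using assms by (simp add: theta_def)
  have "C * (e \<bullet> \<xi>) - (\<alpha> \<bullet> (transpose (Zmat X y) *v w + \<beta> *\<^sub>R y + \<xi> - r)) - \<eta> \<bullet> \<xi>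
     = (\<Sum>i\<in>UNIV. \<alpha>$i * r$i) + (\<Sum>i\<in>UNIV. (C * e$i - \<alpha>$i - \<eta>$i) * \<xi>$i)
       - \<beta> * (y \<bullet> \<alpha>) - (Zmat X y *v \<alpha>) \<bullet> w"
  proof -
    have h: "\<alpha> \<bullet> (transpose (Zmat X y) *v w + \<beta> *\<^sub>R y + \<xi> - r)
       = (Zmat X y *v \<alpha>) \<bullet> w + \<beta> * (y \<bullet> \<alpha>) + \<alpha> \<bullet> \<xi> - \<alpha> \<bullet> r"
      by (simp only: inner_add_right inner_diff_right inner_transpose inner_scaleR_right inner_commute[of y])
    show ?thesis unfolding h
      by (simp add: inner_vec_def sum_distrib_left sum_subtractf[symmetric] sum.distrib[symmetric] algebra_simps)
  qed
  then show ?thesis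
    unfolding lagrangian_def Phi_def LF_def th by (simp add: sum.distrib algebra_simps)
qed

lemma lag_nonpos:
  assumes "r$i \<le> 0"
  shows "lagrangian q C e X y r \<xi> w \<beta> \<alpha> \<eta> lam = \<infinity>"
proof -
  have "\<exists>i\<in>UNIV. theta q (r$i) = \<infinity>" using assms by (intro bexI[of _ i]) (auto simp: theta_def)
  then have "(\<Sum>i\<in>UNIV. theta q (r$i)) = \<infinity>"
    unfolding sum_Pinfty by simp
  then show ?thesis unfolding lagrangian_def Phi_def by simp
qed

lemma dual_le:
  "dual_fun q C e X y \<alpha> \<eta> lam \<le> lagrangian q C e X y r \<xi> w \<beta> \<alpha> \<eta> lam"
  unfolding dual_fun_def by (rule INF_lower2[of "(r, \<xi>, w, \<beta>)"]) auto


lemma dual_neginf: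
  fixes X :: "real^'n^'d" and y e \<alpha> \<eta> :: "real^'n"
  assumes q: "q > 0" and lam: "lam \<ge> 0"
    and H: "(\<exists>i. \<alpha>$i < 0) \<or> (\<exists>i. \<eta>$i \<noteq> C*e$i - \<alpha>$i) \<or> y \<bullet> \<alpha> \<noteq> 0 \<or> (lam = 0 \<and> Zmat X y *v \<alpha> \<noteq> 0)"
  shows "dual_fun q C e X y \<alpha> \<eta> lam = -\<infinity>"
proof (rule ereal_bot)
  fix B
  define one :: "real^'n" where "one = (\<chi> j. 1)"
  have pos1: "\<forall>i. one$i > 0" by (simp add: one_def)
  define G0 where "G0 = LF q C e X y one 0 0 0 \<alpha> \<eta> lam"
  let ?v = "Zmat X y *v \<alpha>"
  have key: "dual_fun q C e X y \<alpha> \<eta> lam \<le> ereal B"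
    if "\<forall>i. r$i > 0" "LF q C e X y r \<xi> w \<beta> \<alpha> \<eta> lam \<le> B" for r \<xi> w \<beta>
    using dual_le[of q C e X y \<alpha> \<eta> lam r \<xi> w \<beta>] lag_pos[OF that(1)] that(2)
    by (metis ereal_less_eq(3) order_trans)
  from H consider (a) i where "\<alpha>$i < 0" | (b) i where "\<eta>$i \<noteq> C*e$i - \<alpha>$i"
    | (c) "y \<bullet> \<alpha> \<noteq> 0" | (d) "lam = 0" "?v \<noteq> 0" by blast
  then show "dual_fun q C e X y \<alpha> \<eta> lam \<le> ereal B"
  proof cases
    case b
    define c where "c = C*e$i - \<alpha>$i - \<eta>$i"
    have c: "c \<noteq> 0" using b by (simp add: c_def)
    define s where "s = (B - G0) / c"
    define xi :: "real^'n" where "xi = (\<chi> j. if j = i then s else 0)"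
    have "LF q C e X y one xi 0 0 \<alpha> \<eta> lam = G0 + c * s"
      unfolding G0_def LF_def xi_def c_def by (simp add: if_distrib cong: if_cong)
    also have "\<dots> = B" using c by (simp add: s_def)
    finally show ?thesis using key[OF pos1] by (metis order_refl)
  next
    case c
    define \<beta> where "\<beta> = (G0 - B) / (y \<bullet> \<alpha>)"
    have "LF q C e X y one 0 0 \<beta> \<alpha> \<eta> lam = G0 - \<beta> * (y \<bullet> \<alpha>)"
      unfolding G0_def LF_def by simp
    also have "\<dots> = B" using c by (simp add: \<beta>_def)
    finally show ?thesis using key[OF pos1] by (metis order_refl)
  next
    case d
    define t where "t = (G0 - B) / (?v \<bullet> ?v)"
    have vv: "?v \<bullet> ?v \<noteq> 0" using d by simp
    have "LF q C e X y one 0 (t *\<^sub>R ?v) 0 \<alpha> \<eta> lam = G0 - t * (?v \<bullet> ?v)"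
      unfolding G0_def LF_def using d by simp
    also have "\<dots> = B" using vv by (simp add: t_def)
    finally show ?thesis using key[OF pos1] by (metis order_refl)
  next
    case a
    define K where "K = (\<Sum>j\<in>UNIV. 1 + \<bar>\<alpha>$j\<bar>)"
    define t where "t = max 1 ((B - K) / \<alpha>$i)"
    have t1: "t \<ge> 1" by (simp add: t_def)
    have "(B - K) / \<alpha>$i \<le> t" by (simp add: t_def)
    then have at: "\<alpha>$i * t \<le> B - K" using a by (simp add: divide_le_eq mult.commute)
    define r :: "real^'n" where "r = (\<chi> j. if j = i then t else 1)"
    have rpos: "\<forall>j. r$j > 0" using t1 by (simp add: r_def)
    have g: "r$j powr (-q) + \<alpha>$j * r$j \<le> 1 + \<bar>\<alpha>$j\<bar> + (if j = i then \<alpha>$i * t else 0)" for j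
    proof (cases "j = i")
      case True
      have "1 \<le> t powr q" using t1 q by (simp add: ge_one_powr_ge_zero)
      then have "t powr (-q) \<le> 1" by (simp add: powr_minus_divide divide_le_eq)
      then show ?thesis using True by (simp add: r_def)
    next
      case False then show ?thesis by (simp add: r_def)
    qed
    have "(\<Sum>j\<in>UNIV. r$j powr (-q) + \<alpha>$j * r$j) \<le> (\<Sum>j\<in>UNIV. 1 + \<bar>\<alpha>$j\<bar> + (if j = i then \<alpha>$i * t else 0))"
      by (rule sum_mono) (rule g)
    also have "\<dots> = K + \<alpha>$i * t" by (simp add: K_def sum.distrib)
    finally have "LF q C e X y r 0 0 0 \<alpha> \<eta> lam \<le> K + \<alpha>$i * t - lam / 2"
      unfolding LF_def by simp
    also have "\<dots> \<le> B" using at lam by simp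
    finally show ?thesis by (intro key[OF rpos])
  qed
qed


lemma wpart_ub:
  fixes v w :: "real^'d"
  assumes "lam \<ge> 0" "lam = 0 \<longrightarrow> v = 0"
  shows "- (v \<bullet> (if lam = 0 then 0 else (1/lam) *\<^sub>R v))
         + lam * ((norm (if lam = 0 then 0 else (1/lam) *\<^sub>R v) ^ 2 - 1) / 2) \<le> - norm v"
proof (cases "lam = 0")
  case True then show ?thesis using assms by simp
next
  case False
  then have l: "lam > 0" using assms by simp
  let ?N = "norm v"
  have "- (v \<bullet> ((1/lam) *\<^sub>R v)) + lam * ((norm ((1/lam) *\<^sub>R v) ^ 2 - 1) / 2)
        = - (?N^2 + lam^2) / (2*lam)"
    using l by (simp add: power2_norm_eq_inner[symmetric] power_divide field_simps power2_eq_square)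
  also have "\<dots> \<le> - ?N"
  proof -
    have "2*lam*?N \<le> ?N^2 + lam^2" using sum_squares_ge_zero
      by (smt (verit) power2_diff zero_le_power2)
    then show ?thesis using l by (simp add: field_simps)
  qed
  finally show ?thesis using False by simp
qed

lemma wpart_lb:
  fixes v w :: "real^'d"
  shows "- norm v \<le> - (v \<bullet> w) + norm v * ((norm w ^ 2 - 1) / 2)"
proof -
  have "v \<bullet> w \<le> norm v * norm w" by (rule norm_cauchy_schwarz)
  moreover have "0 \<le> norm v * ((norm w - 1)^2)" by simp
  ultimately show ?thesis by (simp add: power2_diff algebra_simps)
qed

lemma dual_ub:
  fixes X :: "real^'n^'d" and y e \<alpha> \<eta> :: "real^'n"
  assumes q: "q > 0" and a: "\<forall>i. \<alpha>$i \<ge> 0" and eta: "\<forall>i. \<eta>$i = C*e$i - \<alpha>$i"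
    and lam: "lam \<ge> 0" "lam = 0 \<longrightarrow> Zmat X y *v \<alpha> = 0"
  shows "dual_fun q C e X y \<alpha> \<eta> lam \<le> ereal (- Psi q X y \<alpha>)"
proof (rule ereal_le_epsilon2)
  fix \<epsilon> :: real assume \<epsilon>: "\<epsilon> > 0"
  let ?v = "Zmat X y *v \<alpha>"
  define \<delta> where "\<delta> = \<epsilon> / real CARD('n)"
  have \<delta>: "\<delta> > 0" using \<epsilon> by (simp add: \<delta>_def)
  have "\<forall>i. \<exists>t. t > 0 \<and> t powr (-q) + \<alpha>$i*t \<le> kappa q * (\<alpha>$i) powr (q/(q+1)) + \<delta>"
    using near[OF q _ \<delta>] a by blast
  then obtain rr where rr: "\<forall>i. rr i > 0 \<and> rr i powr (-q) + \<alpha>$i * rr i \<le> kappa q * (\<alpha>$i) powr (q/(q+1)) + \<delta>"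
    by metis
  define r :: "real^'n" where "r = (\<chi> i. rr i)"
  have rpos: "\<forall>i. r$i > 0" using rr by (simp add: r_def)
  define W where "W = (if lam = 0 then 0 else (1/lam) *\<^sub>R ?v)"
  have "(\<Sum>i\<in>UNIV. r$i powr (-q) + \<alpha>$i * r$i) \<le> (\<Sum>i\<in>UNIV. kappa q * (\<alpha>$i) powr (q/(q+1)) + \<delta>)"
    by (rule sum_mono) (use rr in \<open>simp add: r_def\<close>)
  also have "\<dots> = kappa q * (\<Sum>i\<in>UNIV. (\<alpha>$i) powr (q/(q+1))) + \<epsilon>"
    by (simp add: sum.distrib sum_distrib_left \<delta>_def)
  finally have S: "(\<Sum>i\<in>UNIV. r$i powr (-q) + \<alpha>$i * r$i) \<le> kappa q * (\<Sum>i\<in>UNIV. (\<alpha>$i) powr (q/(q+1))) + \<epsilon>" .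
  have Wp: "- (?v \<bullet> W) + lam * ((norm W ^ 2 - 1) / 2) \<le> - norm ?v"
    unfolding W_def by (rule wpart_ub[OF lam])
  have "LF q C e X y r 0 W 0 \<alpha> \<eta> lam \<le> - Psi q X y \<alpha> + \<epsilon>"
    using S Wp unfolding LF_def Psi_def by simp
  then have "lagrangian q C e X y r 0 W 0 \<alpha> \<eta> lam \<le> ereal (- Psi q X y \<alpha>) + ereal \<epsilon>"
    by (simp add: lag_pos[OF rpos])
  then show "dual_fun q C e X y \<alpha> \<eta> lam \<le> ereal (- Psi q X y \<alpha>) + ereal \<epsilon>"
    using dual_le order_trans by blast
qed

lemma dual_lb:
  fixes X :: "real^'n^'d" and y e \<alpha> :: "real^'n"
  assumes q: "q > 0" and a: "\<forall>i. \<alpha>$i \<ge> 0" and y0: "y \<bullet> \<alpha> = 0"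
  shows "ereal (- Psi q X y \<alpha>) \<le> dual_fun q C e X y \<alpha> (\<chi> i. C*e$i - \<alpha>$i) (norm (Zmat X y *v \<alpha>))"
  unfolding dual_fun_def
proof (rule INF_greatest, clarify)
  fix r \<xi> :: "real^'n" and w :: "real^'d" and \<beta> :: real
  let ?v = "Zmat X y *v \<alpha>"
  show "ereal (- Psi q X y \<alpha>) \<le> lagrangian q C e X y r \<xi> w \<beta> \<alpha> (\<chi> i. C*e$i - \<alpha>$i) (norm ?v)"
  proof (cases "\<forall>i. r$i > 0")
    case False
    then obtain i where "r$i \<le> 0" by (meson not_less)
    then show ?thesis by (simp add: lag_nonpos)
  next
    case True
    have S: "kappa q * (\<Sum>i\<in>UNIV. (\<alpha>$i) powr (q/(q+1))) \<le> (\<Sum>i\<in>UNIV. r$i powr (-q) + \<alpha>$i * r$i)"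
      unfolding sum_distrib_left by (rule sum_mono) (use True a key_ineq[OF q] in auto)
    have "- Psi q X y \<alpha> \<le> LF q C e X y r \<xi> w \<beta> \<alpha> (\<chi> i. C*e$i - \<alpha>$i) (norm ?v)"
      using S wpart_lb[of ?v w] y0 unfolding LF_def Psi_def by simp
    then show ?thesis by (simp add: lag_pos[OF True])
  qed
qed


lemma part1:
  fixes X :: "real^'n^'d" and y e \<alpha> :: "real^'n"
  assumes q: "q > 0"
  shows "(SUP p \<in> {(\<eta>, lam). (\<forall>i. \<eta> $ i \<ge> 0) \<and> lam \<ge> 0}.
                    dual_fun q C e X y \<alpha> (fst p) (snd p))
              = (if dual_feasible C e y \<alpha> then ereal (- Psi q X y \<alpha>) else -\<infinity>)"
proof (cases "dual_feasible C e y \<alpha>")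
  case True
  then have a: "\<forall>i. \<alpha>$i \<ge> 0" and ub: "\<forall>i. \<alpha>$i \<le> C*e$i" and y0: "y \<bullet> \<alpha> = 0"
    by (auto simp: dual_feasible_def)
  let ?v = "Zmat X y *v \<alpha>"
  have "(SUP p \<in> {(\<eta>, lam). (\<forall>i. \<eta> $ i \<ge> 0) \<and> lam \<ge> 0}. dual_fun q C e X y \<alpha> (fst p) (snd p))
        = ereal (- Psi q X y \<alpha>)"
  proof (rule antisym)
    show "(SUP p \<in> {(\<eta>, lam). (\<forall>i. \<eta> $ i \<ge> 0) \<and> lam \<ge> 0}. dual_fun q C e X y \<alpha> (fst p) (snd p))
        \<le> ereal (- Psi q X y \<alpha>)"
    proof (rule SUP_least, clarify)
      fix \<eta> :: "real^'n" and lam :: real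
      assume "\<forall>i. \<eta> $ i \<ge> 0" and lam: "lam \<ge> 0"
      show "dual_fun q C e X y \<alpha> (fst (\<eta>, lam)) (snd (\<eta>, lam)) \<le> ereal (- Psi q X y \<alpha>)"
      proof (cases "(\<forall>i. \<eta>$i = C*e$i - \<alpha>$i) \<and> (lam = 0 \<longrightarrow> ?v = 0)")
        case True
        then show ?thesis by (auto intro!: dual_ub[OF q a _ lam])
      next
        case False
        then have "dual_fun q C e X y \<alpha> \<eta> lam = -\<infinity>"
          by (intro dual_neginf[OF q lam]) auto
        then show ?thesis by simp
      qed
    qed
  next
    have m: "(\<chi> i. C*e$i - \<alpha>$i, norm ?v) \<in> {(\<eta>, lam). (\<forall>i. \<eta> $ i \<ge> 0) \<and> lam \<ge> 0}"
      using ub by simp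
    show "ereal (- Psi q X y \<alpha>) \<le> (SUP p \<in> {(\<eta>, lam). (\<forall>i. \<eta> $ i \<ge> 0) \<and> lam \<ge> 0}. dual_fun q C e X y \<alpha> (fst p) (snd p))"
      by (rule SUP_upper2[OF m]) (simp add: dual_lb[OF q a y0])
  qed
  then show ?thesis using True by simp
next
  case False
  have "(SUP p \<in> {(\<eta>, lam). (\<forall>i. \<eta> $ i \<ge> 0) \<and> lam \<ge> 0}. dual_fun q C e X y \<alpha> (fst p) (snd p)) \<le> -\<infinity>"
  proof (rule SUP_least, clarify)
    fix \<eta> :: "real^'n" and lam :: real
    assume eta: "\<forall>i. \<eta> $ i \<ge> 0" and lam: "lam \<ge> 0"
    have "(\<exists>i. \<alpha>$i < 0) \<or> (\<exists>i. \<eta>$i \<noteq> C*e$i - \<alpha>$i) \<or> y \<bullet> \<alpha> \<noteq> 0"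
    proof -
      from False consider (1) i where "\<not> (0 \<le> \<alpha>$i)" | (2) i where "\<not> \<alpha>$i \<le> C*e$i" | (3) "y \<bullet> \<alpha> \<noteq> 0"
        unfolding dual_feasible_def by blast
      then show ?thesis
      proof cases
        case (2 i) then have "\<eta>$i \<noteq> C*e$i - \<alpha>$i" using eta[rule_format, of i] by linarith
        then show ?thesis by blast
      qed (auto simp: not_le)
    qed
    then have "dual_fun q C e X y \<alpha> \<eta> lam = -\<infinity>"
      by (intro dual_neginf[OF q lam]) auto
    then show "dual_fun q C e X y \<alpha> (fst (\<eta>, lam)) (snd (\<eta>, lam)) \<le> -\<infinity>" by simp
  qed
  then show ?thesis using False by simp
qed

theorem proposition1:
  fixes X :: "real^'n^'d" and y e :: "real^'n" and q C :: real
  assumes "\<forall>i. y $ i = 1 \<or> y $ i = -1"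
    and "q > 0" and "C > 0"
    and "\<forall>i. e $ i > 0" and "infnorm e = 1"
  shows "(\<forall>\<alpha>. (SUP p \<in> {(\<eta>, lam). (\<forall>i. \<eta> $ i \<ge> 0) \<and> lam \<ge> 0}.
                    dual_fun q C e X y \<alpha> (fst p) (snd p))
              = (if dual_feasible C e y \<alpha> then ereal (- Psi q X y \<alpha>) else -\<infinity>))
       \<and> (SUP p \<in> {(\<alpha>, \<eta>, lam). (\<forall>i. \<eta> $ i \<ge> 0) \<and> lam \<ge> 0}.
              dual_fun q C e X y (fst p) (fst (snd p)) (snd (snd p)))
         = - (INF \<alpha> \<in> {\<alpha>. dual_feasible C e y \<alpha>}. ereal (Psi q X y \<alpha>))"
proof
  have q: "q > 0" by fact
  note P1 = part1[OF q, of C e X y]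
  show "\<forall>\<alpha>. (SUP p \<in> {(\<eta>, lam). (\<forall>i. \<eta> $ i \<ge> 0) \<and> lam \<ge> 0}.
                    dual_fun q C e X y \<alpha> (fst p) (snd p))
              = (if dual_feasible C e y \<alpha> then ereal (- Psi q X y \<alpha>) else -\<infinity>)"
    by (intro allI P1)
  let ?S = "(SUP p \<in> {(\<alpha>, \<eta>, lam). (\<forall>i. \<eta> $ i \<ge> 0) \<and> lam \<ge> 0}.
              dual_fun q C e X y (fst p) (fst (snd p)) (snd (snd p)))"
  let ?I = "(INF \<alpha> \<in> {\<alpha>. dual_feasible C e y \<alpha>}. ereal (Psi q X y \<alpha>))"
  show "?S = - ?I"
  proof (rule antisym)
    show "?S \<le> - ?I"
    proof (rule SUP_least, clarify)
      fix \<alpha> \<eta> :: "real^'n" and lam :: real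
      assume "\<forall>i. \<eta> $ i \<ge> 0" "lam \<ge> 0"
      then have "dual_fun q C e X y \<alpha> \<eta> lam \<le> (SUP p \<in> {(\<eta>, lam). (\<forall>i. \<eta> $ i \<ge> 0) \<and> lam \<ge> 0}.
                    dual_fun q C e X y \<alpha> (fst p) (snd p))"
        by (intro SUP_upper2[of "(\<eta>, lam)"]) auto
      also have "\<dots> \<le> - ?I"
      proof (cases "dual_feasible C e y \<alpha>")
        case True
        have "?I \<le> ereal (Psi q X y \<alpha>)" by (rule INF_lower) (use True in simp)
        then have "- ereal (Psi q X y \<alpha>) \<le> - ?I" by (simp only: ereal_minus_le_minus)
        then have "ereal (- Psi q X y \<alpha>) \<le> - ?I" by simp
        then show ?thesis using True P1 by simp
      qed (use P1 in simp)
      finally show "dual_fun q C e X y (fst (\<alpha>, \<eta>, lam)) (fst (snd (\<alpha>, \<eta>, lam))) (snd (snd (\<alpha>, \<eta>, lam))) \<le> - ?I"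
        by simp
    qed
  next
    have "- ?S \<le> ?I"
    proof (rule INF_greatest)
      fix \<alpha> assume F: "\<alpha> \<in> {\<alpha>. dual_feasible C e y \<alpha>}"
      have "(SUP p \<in> {(\<eta>, lam). (\<forall>i. \<eta> $ i \<ge> 0) \<and> lam \<ge> 0}.
                    dual_fun q C e X y \<alpha> (fst p) (snd p)) \<le> ?S"
      proof (rule SUP_least, clarify)
        fix \<eta> :: "real^'n" and lam :: real
        assume "\<forall>i. \<eta> $ i \<ge> 0" "lam \<ge> 0"
        then show "dual_fun q C e X y \<alpha> (fst (\<eta>, lam)) (snd (\<eta>, lam)) \<le> ?S"
          by (intro SUP_upper2[of "(\<alpha>, \<eta>, lam)"]) auto
      qed
      then have "ereal (- Psi q X y \<alpha>) \<le> ?S" using F P1 by simp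
      then have "- ereal (Psi q X y \<alpha>) \<le> ?S" by simp
      then show "- ?S \<le> ereal (Psi q X y \<alpha>)"
        by (simp only: ereal_uminus_le_reorder[of ?S])
    qed
    then show "- ?I \<le> ?S" by (simp add: ereal_uminus_le_reorder)
  qed
qed

end
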